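(* Let $(\alpha,\beta)$ be a rigid elliptic structure on a domain $\Omega \subseteq \mathbb{R}^2$. Then $\alpha$, $\beta$, and the spectral parameter $\lambda$ are real-analytic on $\Omega$. In particular, if $(\alpha,\beta)$ is $C^k$ for some finite $k$ but not $C^\omega$ (real-analytic), then $(\alpha,\beta)$ is not rigid.
   Context: A variable elliptic structure on $\Omega\subseteq\mathbb{R}^2$ is a pair of real functions $(\alpha,\beta)$ with $\Delta = 4\alpha - \beta^2 > 0$; it determines a moving imaginary unit $i(x,y)$ satisfying $i^2+\beta i+\alpha=0$ and the spectral parameter $\lambda = (-\beta + i\sqrt{\Delta})/2 \in \mathbb{C}_+$ (so $\alpha=|\lambda|^2$, $\beta=-2\operatorname{Re}\lambda$). The structure is rigid if its intrinsic obstruction $G = i_x + i\cdot i_y$ vanishes; in that case the spectral parameter satisfies the conservative complex Burgers equation $\lambda_x + \lambda\lambda_y = 0$. *)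

theory Defs
  imports "HOL-Analysis.Analysis"
begin

definition domain2 :: "(real \<times> real) set \<Rightarrow> bool" where
  "domain2 \<Omega> \<longleftrightarrow> open \<Omega> \<and> connected \<Omega> \<and> \<Omega> \<noteq> {}"

definition pdx :: "(real \<times> real \<Rightarrow> 'a::real_normed_vector) \<Rightarrow> real \<times> real \<Rightarrow> 'a" where
  "pdx f p = vector_derivative (\<lambda>t. f (t, snd p)) (at (fst p))"

definition pdy :: "(real \<times> real \<Rightarrow> 'a::real_normed_vector) \<Rightarrow> real \<times> real \<Rightarrow> 'a" where
  "pdy f p = vector_derivative (\<lambda>t. f (fst p, t)) (at (snd p))"

definition C1_on :: "(real \<times> real) set \<Rightarrow> (real \<times> real \<Rightarrow> 'a::real_normed_vector) \<Rightarrow> bool" where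
  "C1_on \<Omega> f \<longleftrightarrow> f differentiable_on \<Omega> \<and> continuous_on \<Omega> (pdx f) \<and> continuous_on \<Omega> (pdy f)"

text \<open>Real-analyticity on the plane: near every point, f is the sum of an
  (unconditionally, i.e. absolutely) convergent double power series.\<close>
definition real_analytic_on2 :: "(real \<times> real) set \<Rightarrow> (real \<times> real \<Rightarrow> 'a::real_normed_vector) \<Rightarrow> bool" where
  "real_analytic_on2 \<Omega> f \<longleftrightarrow>
     (\<forall>p\<in>\<Omega>. \<exists>r>0. \<exists>c :: nat \<Rightarrow> nat \<Rightarrow> 'a.
        \<forall>q\<in>ball p r. ((\<lambda>(m,n). ((fst q - fst p) ^ m * (snd q - snd p) ^ n) *\<^sub>R c m n)
                        has_sum f q) UNIV)"

definition elliptic_structure :: "(real \<times> real) set \<Rightarrow> (real \<times> real \<Rightarrow> real) \<Rightarrow> (real \<times> real \<Rightarrow> real) \<Rightarrow> bool" where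
  "elliptic_structure \<Omega> \<alpha> \<beta> \<longleftrightarrow> (\<forall>p\<in>\<Omega>. 4 * \<alpha> p - (\<beta> p)^2 > 0)"

definition spectral_param :: "(real \<times> real \<Rightarrow> real) \<Rightarrow> (real \<times> real \<Rightarrow> real) \<Rightarrow> real \<times> real \<Rightarrow> complex" where
  "spectral_param \<alpha> \<beta> p = Complex (- \<beta> p / 2) (sqrt (4 * \<alpha> p - (\<beta> p)^2) / 2)"

text \<open>The moving imaginary unit i(x,y), the root of i^2 + \<beta> i + \<alpha> = 0, realised in C
  through the pointwise algebra isomorphism R[i]/(i^2+\<beta>i+\<alpha>) \<cong> C, i \<mapsto> \<lambda>(x,y).\<close>
definition moving_unit :: "(real \<times> real \<Rightarrow> real) \<Rightarrow> (real \<times> real \<Rightarrow> real) \<Rightarrow> real \<times> real \<Rightarrow> complex" where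
  "moving_unit \<alpha> \<beta> = spectral_param \<alpha> \<beta>"

definition obstruction :: "(real \<times> real \<Rightarrow> real) \<Rightarrow> (real \<times> real \<Rightarrow> real) \<Rightarrow> real \<times> real \<Rightarrow> complex" where
  "obstruction \<alpha> \<beta> p = pdx (moving_unit \<alpha> \<beta>) p + moving_unit \<alpha> \<beta> p * pdy (moving_unit \<alpha> \<beta>) p"

definition rigid_elliptic_structure :: "(real \<times> real) set \<Rightarrow> (real \<times> real \<Rightarrow> real) \<Rightarrow> (real \<times> real \<Rightarrow> real) \<Rightarrow> bool" where
  "rigid_elliptic_structure \<Omega> \<alpha> \<beta> \<longleftrightarrow>
     elliptic_structure \<Omega> \<alpha> \<beta> \<and> C1_on \<Omega> \<alpha> \<and> C1_on \<Omega> \<beta> \<and>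
     (\<forall>p\<in>\<Omega>. obstruction \<alpha> \<beta> p = 0)"

end

theory Submission
  imports Defs "HOL-Complex_Analysis.Complex_Analysis"
begin


lemma diag_bij: "bij_betw (\<lambda>(m::nat,n::nat). (m+n, m)) UNIV (SIGMA k:UNIV. {..k})"
  by (rule bij_betwI[where g="\<lambda>(k,m). (m, k-m)"]) auto

lemma binom_summable:
  fixes X Y :: real
  assumes "X \<ge> 0" "Y \<ge> 0" "X + Y < 1"
  shows "(\<lambda>(m,n). real ((m+n) choose m) * X^m * Y^n) summable_on UNIV"
proof -
  let ?g = "\<lambda>(k::nat,m::nat). real (k choose m) * X^m * Y^(k-m)"
  have "?g summable_on (SIGMA k:UNIV. {..k})"
  proof (rule summable_on_SigmaI)
    show "((\<lambda>m. ?g (k, m)) has_sum (X+Y)^k) {..k}" for k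
      by (subst binomial_ring) (auto intro: has_sum_finite)
    show "(\<lambda>k. (X+Y)^k) summable_on UNIV"
      using assms by (intro summable_nonneg_imp_summable_on summable_geometric) auto
    show "?g (k,m) \<ge> 0" for k m using assms by auto
  qed
  then have "(\<lambda>x. ?g ((\<lambda>(m::nat,n::nat). (m+n, m)) x)) summable_on UNIV"
    using summable_on_reindex_bij_betw[OF diag_bij, of ?g] by simp
  then show ?thesis by (simp add: case_prod_unfold)
qed

lemma diag_sums:
  fixes T :: "nat \<times> nat \<Rightarrow> 'a::banach"
  assumes "(T has_sum S) UNIV"
  shows "(\<lambda>k. \<Sum>m\<le>k. T (m, k-m)) sums S"
proof -
  have "((\<lambda>(k,m). T (m, k-m)) has_sum S) (SIGMA k:UNIV. {..k})"
    using assms has_sum_reindex_bij_betw[OF diag_bij, of "\<lambda>(k,m). T (m, k-m)" S]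
    by (simp add: case_prod_unfold)
  then have "((\<lambda>k. \<Sum>m\<le>k. T (m, k-m)) has_sum S) UNIV"
    by (rule has_sum_SigmaD) (auto intro: has_sum_finite)
  then show ?thesis by (rule has_sum_imp_sums)
qed

definition acoef :: "(complex\<Rightarrow>complex) \<Rightarrow> (complex\<Rightarrow>complex) \<Rightarrow> complex \<Rightarrow> real \<Rightarrow> nat \<Rightarrow> nat \<Rightarrow> complex" where
  "acoef F h c r m n = of_nat ((m+n) choose m) * (-1)^m *
     contour_integral (circlepath c r) (\<lambda>\<zeta>. h \<zeta> * F \<zeta> ^ m / (\<zeta> - c)^(m+n+1))"

lemma GS:
  fixes F h :: "complex \<Rightarrow> complex" and c :: complex and r B Hb u s :: real
  assumes r: "r > 0" and cF: "continuous_on (sphere c r) F" and ch: "continuous_on (sphere c r) h"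
    and FB: "\<And>z. z \<in> sphere c r \<Longrightarrow> norm (F z) \<le> B"
    and hB: "\<And>z. z \<in> sphere c r \<Longrightarrow> norm (h z) \<le> Hb"
    and B: "B \<ge> 0" and Hb: "Hb \<ge> 0" and small: "\<bar>u\<bar> * B + \<bar>s\<bar> < r"
  shows "((\<lambda>(m,n). (u^m * s^n) *\<^sub>R acoef F h c r m n) has_sum
            contour_integral (circlepath c r) (\<lambda>z. h z / (z - c - of_real s + of_real u * F z))) UNIV"
    and "(\<lambda>(m,n). norm ((u^m * s^n) *\<^sub>R acoef F h c r m n)) summable_on UNIV"
proof -
  define T where "T = (\<lambda>(m,n). (u^m * s^n) *\<^sub>R acoef F h c r m n)"
  define K where "K = contour_integral (circlepath c r) (\<lambda>z. h z / (z - c - of_real s + of_real u * F z))"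
  define t where "t z = of_real s - of_real u * F z" for z
  define q where "q = (\<bar>u\<bar> * B + \<bar>s\<bar>) / r"
  have q0: "q \<ge> 0" and q1: "q < 1" using r small B by (auto simp: q_def)
  have nr: "norm (z - c) = r" if "z \<in> sphere c r" for z
    using that by (simp add: dist_norm norm_minus_commute)
  have tb: "norm (t z) \<le> \<bar>u\<bar> * B + \<bar>s\<bar>" if "z \<in> sphere c r" for z
  proof -
    have "norm (t z) \<le> norm (of_real s :: complex) + norm (of_real u * F z)"
      unfolding t_def by (rule norm_triangle_ineq4)
    also have "\<dots> \<le> \<bar>s\<bar> + \<bar>u\<bar> * B"
      using FB[OF that] by (simp add: norm_mult mult_left_mono)
    finally show ?thesis by simp
  qed
  define f where "f k z = h z * t z ^ k / (z - c)^(k+1)" for k z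
  have fb: "norm (f k z) \<le> Hb * q^k / r" if "z \<in> sphere c r" for k z
  proof -
    have "norm (f k z) = norm (h z) * norm (t z) ^ k / r^(k+1)"
      using nr[OF that] by (simp add: f_def norm_mult norm_divide norm_power)
    also have "\<dots> \<le> Hb * (\<bar>u\<bar> * B + \<bar>s\<bar>) ^ k / r^(k+1)"
      using hB[OF that] tb[OF that] r Hb
      by (intro divide_right_mono mult_mono power_mono) auto
    also have "\<dots> = Hb * q^k / r" using r by (simp add: q_def power_divide field_simps)
    finally show ?thesis .
  qed
  have fs: "(\<lambda>k. f k z) sums (h z / (z - c - of_real s + of_real u * F z))" if "z \<in> sphere c r" for z
  proof -
    have zc: "z - c \<noteq> 0" using nr[OF that] r by auto
    have "norm (t z / (z - c)) < 1"
      using nr[OF that] tb[OF that] small r by (simp add: norm_divide)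
    then have "(\<lambda>k. (t z / (z - c))^k) sums (1 / (1 - t z / (z - c)))"
      by (rule geometric_sums)
    then have S: "(\<lambda>k. h z / (z - c) * (t z / (z - c))^k) sums (h z / (z - c) * (1 / (1 - t z / (z - c))))"
      by (rule sums_mult)
    have E1: "(\<lambda>k. h z / (z - c) * (t z / (z - c))^k) = (\<lambda>k. f k z)"
      by (rule ext) (simp add: f_def power_divide)
    have E2: "h z / (z - c) * (1 / (1 - t z / (z - c))) = h z / (z - c - of_real s + of_real u * F z)"
    proof -
      have "norm (t z) < norm (z - c)" using nr[OF that] tb[OF that] small by simp
      then have d: "z - c - t z \<noteq> 0" by auto
      have "1 - t z / (z - c) = (z - c - t z) / (z - c)" using zc by (simp add: field_simps)
      then have "h z / (z - c) * (1 / (1 - t z / (z - c))) = h z / (z - c - t z)"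
        using zc d by simp
      then show ?thesis by (simp add: t_def algebra_simps)
    qed
    show ?thesis using S unfolding E1 E2 .
  qed
  have cf: "continuous_on (sphere c r) (f k)" for k
  proof -
    have "\<forall>z\<in>sphere c r. z - c \<noteq> 0" using nr r by fastforce
    then show ?thesis unfolding f_def t_def using cF ch
      by (intro continuous_intros) auto
  qed
  have fint: "f k contour_integrable_on (circlepath c r)" for k
    using cf r by (intro contour_integrable_continuous_circlepath) simp
  have unif: "uniform_limit (sphere c r) (\<lambda>N z. \<Sum>k<N. f k z) (\<lambda>z. suminf (\<lambda>k. f k z)) sequentially"
    by (rule Weierstrass_m_test[where M="\<lambda>k. Hb * q^k / r"])
       (use fb q0 q1 in \<open>auto intro!: summable_divide summable_mult summable_geometric\<close>)
  have lim: "(\<lambda>N. contour_integral (circlepath c r) (\<lambda>z. \<Sum>k<N. f k z)) \<longlonglongrightarrow>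
              contour_integral (circlepath c r) (\<lambda>z. suminf (\<lambda>k. f k z))"
    by (rule contour_integral_uniform_limit_circlepath(2)[OF _ unif])
       (use fint r in \<open>auto intro!: always_eventually contour_integrable_sum\<close>)
  have "contour_integral (circlepath c r) (\<lambda>z. suminf (\<lambda>k. f k z)) = K"
    unfolding K_def using fs r by (intro contour_integral_eq) (auto simp: sums_iff)
  moreover have "contour_integral (circlepath c r) (\<lambda>z. \<Sum>k<N. f k z) = (\<Sum>k<N. contour_integral (circlepath c r) (f k))" for N
    using fint by (intro contour_integral_sum) auto
  ultimately have sK: "(\<lambda>k. contour_integral (circlepath c r) (f k)) sums K"
    using lim by (simp add: sums_def)
  have gint: "(\<lambda>z. h z * F z ^ m / (z - c)^j) contour_integrable_on (circlepath c r)" for m j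
  proof -
    have "\<forall>z\<in>sphere c r. z - c \<noteq> 0" using nr r by fastforce
    then have "continuous_on (sphere c r) (\<lambda>z. h z * F z ^ m / (z - c)^j)"
      using cF ch by (intro continuous_intros) auto
    then show ?thesis using r by (intro contour_integrable_continuous_circlepath) simp
  qed
  have Ik: "contour_integral (circlepath c r) (f k) = (\<Sum>m\<le>k. T (m, k-m))" for k
  proof -
    define co where "co m = of_nat (k choose m) * (- of_real u)^m * (of_real s :: complex)^(k-m)" for m
    have fe: "f k z = (\<Sum>m\<le>k. co m * (h z * F z ^ m / (z - c)^(k+1)))" for z
    proof -
      have neg: "(-(of_real u * F z))^m = (-of_real u)^m * F z^m" for m
        by (metis minus_mult_left power_mult_distrib)
      have "t z ^ k = (-(of_real u * F z) + of_real s)^k" by (simp add: t_def)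
      also have "\<dots> = (\<Sum>m\<le>k. of_nat (k choose m) * (-(of_real u * F z))^m * of_real s^(k-m))"
        by (rule binomial_ring)
      also have "\<dots> = (\<Sum>m\<le>k. co m * F z ^ m)"
        by (rule sum.cong, simp, simp only: co_def neg, simp add: mult_ac)
      finally have "t z ^ k = (\<Sum>m\<le>k. co m * F z ^ m)" .
      then show ?thesis
        by (simp add: f_def sum_distrib_left sum_divide_distrib mult_ac)
    qed
    have "contour_integral (circlepath c r) (f k) =
          contour_integral (circlepath c r) (\<lambda>z. \<Sum>m\<le>k. co m * (h z * F z ^ m / (z - c)^(k+1)))"
      by (rule arg_cong[where f="contour_integral _"]) (rule ext, rule fe)
    also have "\<dots> = (\<Sum>m\<le>k. contour_integral (circlepath c r) (\<lambda>z. co m * (h z * F z ^ m / (z - c)^(k+1))))"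
      by (rule contour_integral_sum) (simp, rule contour_integrable_lmul[OF gint])
    also have "\<dots> = (\<Sum>m\<le>k. co m * contour_integral (circlepath c r) (\<lambda>z. h z * F z ^ m / (z - c)^(k+1)))"
      by (rule sum.cong) (simp, rule contour_integral_lmul[OF gint])
    also have "\<dots> = (\<Sum>m\<le>k. T (m, k-m))"
    proof (rule sum.cong)
      fix m assume "m \<in> {..k}"
      then have mk: "m + (k - m) = k" by simp
      show "co m * contour_integral (circlepath c r) (\<lambda>z. h z * F z ^ m / (z - c)^(k+1)) = T (m, k-m)"
        unfolding T_def acoef_def co_def using mk
        by (simp add: scaleR_conv_of_real power_minus[of "of_real u"] mult_ac)
    qed simp
    finally show ?thesis .
  qed
  define X where "X = \<bar>u\<bar> * B / r"
  define Y where "Y = \<bar>s\<bar> / r"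
  have XY: "X \<ge> 0" "Y \<ge> 0" "X + Y < 1" using r B small by (auto simp: X_def Y_def field_simps)
  have Tb: "norm (T (m,n)) \<le> 2 * pi * Hb * (real ((m+n) choose m) * X^m * Y^n)" for m n
  proof -
    have "norm (contour_integral (circlepath c r) (\<lambda>z. h z * F z ^ m / (z - c)^(m+n+1)))
          \<le> (Hb * B^m / r^(m+n+1)) * (2*pi*r)"
    proof (rule has_contour_integral_bound_circlepath[OF has_contour_integral_integral[OF gint]])
      show "0 \<le> Hb * B^m / r^(m+n+1)" using Hb B r by simp
      show "0 < r" by (rule r)
      fix z assume "norm (z - c) = r"
      then have zs: "z \<in> sphere c r" by (simp add: dist_norm norm_minus_commute)
      have "norm (h z * F z ^ m / (z - c)^(m+n+1)) = norm (h z) * norm (F z) ^ m / r^(m+n+1)"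
        using nr[OF zs] by (simp add: norm_mult norm_divide norm_power)
      also have "\<dots> \<le> Hb * B^m / r^(m+n+1)"
        using hB[OF zs] FB[OF zs] r Hb by (intro divide_right_mono mult_mono power_mono) auto
      finally show "norm (h z * F z ^ m / (z - c)^(m+n+1)) \<le> Hb * B^m / r^(m+n+1)" .
    qed
    then have "norm (acoef F h c r m n) \<le> real ((m+n) choose m) * ((Hb * B^m / r^(m+n+1)) * (2*pi*r))"
      unfolding acoef_def by (simp add: norm_mult norm_power mult_left_mono)
    then have "norm (T (m,n)) \<le> \<bar>u\<bar>^m * \<bar>s\<bar>^n * (real ((m+n) choose m) * ((Hb * B^m / r^(m+n+1)) * (2*pi*r)))"
      unfolding T_def by (simp add: abs_mult power_abs mult_left_mono)
    also have "\<dots> = 2 * pi * Hb * (real ((m+n) choose m) * X^m * Y^n)"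
      using r by (simp add: X_def Y_def power_divide power_mult_distrib power_add field_simps)
    finally show ?thesis .
  qed
  have gsum: "(\<lambda>(m,n). 2 * pi * Hb * (real ((m+n) choose m) * X^m * Y^n)) summable_on UNIV"
    using summable_on_cmult_right[OF binom_summable[OF XY], of "2*pi*Hb"] by (simp add: case_prod_unfold)
  have nsum: "(\<lambda>x. norm (T x)) summable_on UNIV"
    by (rule summable_on_comparison_test[OF gsum]) (auto simp: Tb)
  then show "(\<lambda>(m,n). norm ((u^m * s^n) *\<^sub>R acoef F h c r m n)) summable_on UNIV"
    by (simp add: T_def case_prod_unfold)
  have "T summable_on UNIV" using nsum by (rule abs_summable_summable)
  then have hs: "(T has_sum infsum T UNIV) UNIV" by simp
  from diag_sums[OF hs] have "(\<lambda>k. contour_integral (circlepath c r) (f k)) sums infsum T UNIV"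
    by (simp add: Ik)
  with sK have "K = infsum T UNIV" by (rule sums_unique2)
  with hs show "((\<lambda>(m,n). (u^m * s^n) *\<^sub>R acoef F h c r m n) has_sum
            contour_integral (circlepath c r) (\<lambda>z. h z / (z - c - of_real s + of_real u * F z))) UNIV"
    by (simp add: T_def K_def)
qed



definition ser :: "real \<Rightarrow> real \<Rightarrow> (nat \<Rightarrow> nat \<Rightarrow> 'a::real_normed_vector) \<Rightarrow> 'a \<Rightarrow> bool" where
  "ser u s a S \<longleftrightarrow> ((\<lambda>(m,n). (u^m * s^n) *\<^sub>R a m n) has_sum S) UNIV \<and>
      (\<lambda>(m,n). norm ((u^m * s^n) *\<^sub>R a m n)) summable_on UNIV"

lemma ser_blin:
  assumes L: "bounded_linear L" and S: "ser u s a A"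
  shows "ser u s (\<lambda>m n. L (a m n)) (L A)"
proof -
  interpret bounded_linear L by (rule L)
  obtain K where K: "\<And>x. norm (L x) \<le> norm x * K" "K > 0" using pos_bounded by blast
  have "((\<lambda>x. L ((\<lambda>(m,n). (u^m * s^n) *\<^sub>R a m n) x)) has_sum L A) UNIV"
    using S unfolding ser_def by (intro has_sum_bounded_linear[OF L]) auto
  moreover have "(\<lambda>(m,n). norm ((u^m * s^n) *\<^sub>R L (a m n))) summable_on UNIV"
  proof (rule summable_on_comparison_test)
    show "(\<lambda>x. K * (\<lambda>(m,n). norm ((u^m * s^n) *\<^sub>R a m n)) x) summable_on UNIV"
      using S unfolding ser_def by (intro summable_on_cmult_right) auto
    show "(\<lambda>(m,n). norm ((u^m * s^n) *\<^sub>R L (a m n))) x \<le> K * (\<lambda>(m,n). norm ((u^m * s^n) *\<^sub>R a m n)) x" for x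
    proof -
      have "c * norm (L y) \<le> K * (c * norm y)" if "c \<ge> 0" for y c
        using mult_right_mono[OF K(1)[of y] that] by (simp add: mult_ac)
      then show ?thesis by (simp add: case_prod_unfold scaleR)
    qed
  qed (auto simp: case_prod_unfold)
  ultimately show ?thesis unfolding ser_def by (simp add: case_prod_unfold scaleR)
qed

lemma ser_add:
  fixes a b :: "nat \<Rightarrow> nat \<Rightarrow> 'a::real_normed_vector"
  assumes "ser u s a A" "ser u s b B"
  shows "ser u s (\<lambda>m n. a m n + b m n) (A + B)"
proof -
  have "((\<lambda>x. (\<lambda>(m,n). (u^m * s^n) *\<^sub>R a m n) x + (\<lambda>(m,n). (u^m * s^n) *\<^sub>R b m n) x) has_sum A + B) UNIV"
    using assms unfolding ser_def by (intro has_sum_add) auto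
  moreover have "(\<lambda>(m,n). norm ((u^m * s^n) *\<^sub>R (a m n + b m n))) summable_on UNIV"
  proof (rule summable_on_comparison_test)
    show "(\<lambda>x. (\<lambda>(m,n). norm ((u^m * s^n) *\<^sub>R a m n)) x + (\<lambda>(m,n). norm ((u^m * s^n) *\<^sub>R b m n)) x) summable_on UNIV"
      using assms unfolding ser_def by (intro summable_on_add) auto
    show "(\<lambda>(m,n). norm ((u^m * s^n) *\<^sub>R (a m n + b m n))) x \<le> (\<lambda>(m,n). norm ((u^m * s^n) *\<^sub>R a m n)) x + (\<lambda>(m,n). norm ((u^m * s^n) *\<^sub>R b m n)) x" for x
      by (simp add: case_prod_unfold scaleR_right_distrib) (metis norm_scaleR norm_triangle_ineq)
  qed (auto simp: case_prod_unfold)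
  ultimately show ?thesis unfolding ser_def by (simp add: case_prod_unfold scaleR_right_distrib)
qed

lemma ser_shift:
  fixes a :: "nat \<Rightarrow> nat \<Rightarrow> 'a::real_normed_vector"
  assumes "ser u s a A"
  shows "ser u s (\<lambda>m n. if m = 0 then 0 else a (m-1) n) (u *\<^sub>R A)"
proof -
  let ?f = "\<lambda>(m,n). (u^m * s^n) *\<^sub>R a m n"
  let ?g = "\<lambda>(m,n). (u^m * s^n) *\<^sub>R (if m = 0 then 0 else a (m-1) n)"
  have inj: "inj_on (\<lambda>(m,n). (Suc m, n)) UNIV" by (auto simp: inj_on_def)
  have im: "range (\<lambda>(m::nat,n::nat). (Suc m, n)) = {x. fst x \<noteq> 0}"
  proof
    show "{x. fst x \<noteq> 0} \<subseteq> range (\<lambda>(m::nat,n::nat). (Suc m, n))"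
    proof
      fix x :: "nat \<times> nat" assume "x \<in> {x. fst x \<noteq> 0}"
      then have "x = (\<lambda>(m,n). (Suc m, n)) (fst x - 1, snd x)" by (cases x) auto
      then show "x \<in> range (\<lambda>(m::nat,n::nat). (Suc m, n))" by blast
    qed
  qed auto
  have "((\<lambda>x. u *\<^sub>R ?f x) has_sum u *\<^sub>R A) UNIV"
    using assms unfolding ser_def by (intro has_sum_scaleR) auto
  then have "((?g \<circ> (\<lambda>(m,n). (Suc m, n))) has_sum u *\<^sub>R A) UNIV"
    by (simp add: o_def case_prod_unfold mult.assoc)
  then have "(?g has_sum u *\<^sub>R A) {x. fst x \<noteq> 0}"
    using has_sum_reindex[OF inj, of ?g] im by simp
  then have g: "(?g has_sum u *\<^sub>R A) UNIV"
    by (rule has_sum_cong_neutral[THEN iffD1, rotated -1]) (simp_all add: case_prod_unfold)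
  have "((\<lambda>x. \<bar>u\<bar> * (\<lambda>(m,n). norm ((u^m * s^n) *\<^sub>R a m n)) x) has_sum \<bar>u\<bar> * infsum (\<lambda>(m,n). norm ((u^m * s^n) *\<^sub>R a m n)) UNIV) UNIV"
    using assms unfolding ser_def by (intro has_sum_cmult_right has_sum_infsum) auto
  then have "(((\<lambda>x. norm (?g x)) \<circ> (\<lambda>(m,n). (Suc m, n))) has_sum \<bar>u\<bar> * infsum (\<lambda>(m,n). norm ((u^m * s^n) *\<^sub>R a m n)) UNIV) UNIV"
    by (simp add: o_def case_prod_unfold abs_mult mult.assoc)
  then have "((\<lambda>x. norm (?g x)) has_sum \<bar>u\<bar> * infsum (\<lambda>(m,n). norm ((u^m * s^n) *\<^sub>R a m n)) UNIV) {x. fst x \<noteq> 0}"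
    using has_sum_reindex[OF inj, of "\<lambda>x. norm (?g x)"] im by simp
  then have "((\<lambda>x. norm (?g x)) has_sum \<bar>u\<bar> * infsum (\<lambda>(m,n). norm ((u^m * s^n) *\<^sub>R a m n)) UNIV) UNIV"
    by (rule has_sum_cong_neutral[THEN iffD1, rotated -1]) (simp_all add: case_prod_unfold)
  then have "(\<lambda>x. norm (?g x)) summable_on UNIV" by (rule has_sum_imp_summable)
  with g show ?thesis unfolding ser_def by (simp add: case_prod_unfold)
qed

lemma fiber_reindex:
  fixes P :: "(nat \<times> nat) \<times> (nat \<times> nat) \<Rightarrow> 'a::{topological_comm_monoid_add,t3_space}"
  assumes "(P has_sum S) UNIV"
  shows "((\<lambda>mn. \<Sum>ij\<in>{..fst mn}\<times>{..snd mn}. P (ij, (fst mn - fst ij, snd mn - snd ij))) has_sum S) UNIV"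
proof -
  let ?T = "SIGMA mn:(UNIV::(nat\<times>nat) set). {..fst mn}\<times>{..snd mn}"
  let ?i = "\<lambda>(mn::nat\<times>nat, ij::nat\<times>nat). (ij, (fst mn - fst ij, snd mn - snd ij))"
  let ?j = "\<lambda>(ij::nat\<times>nat, kl::nat\<times>nat). ((fst ij + fst kl, snd ij + snd kl), ij)"
  have "(P has_sum S) UNIV = ((P \<circ> ?i) has_sum S) ?T"
    by (rule has_sum_reindex_bij_witness[where i="?i" and j="?j"]) auto
  with assms have "((P \<circ> ?i) has_sum S) ?T" by simp
  then show ?thesis
    by (rule has_sum_SigmaD) (auto intro!: has_sum_finite simp: case_prod_unfold)
qed

lemma ser_mult:
  fixes a b :: "nat \<Rightarrow> nat \<Rightarrow> real"
  assumes A: "ser u s a A" and B: "ser u s b B"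
  shows "ser u s (\<lambda>m n. \<Sum>i\<le>m. \<Sum>j\<le>n. a i j * b (m-i) (n-j)) (A * B)"
proof -
  define f where "f x = (u^fst x * s^snd x) * a (fst x) (snd x)" for x
  define g where "g x = (u^fst x * s^snd x) * b (fst x) (snd x)" for x
  have fA: "(f has_sum A) UNIV" and gB: "(g has_sum B) UNIV"
    using A B unfolding ser_def f_def g_def by (simp_all add: case_prod_unfold)
  have fn: "(\<lambda>x. norm (f x)) summable_on UNIV" and gn: "(\<lambda>x. norm (g x)) summable_on UNIV"
    using A B unfolding ser_def f_def g_def by (simp_all add: case_prod_unfold)
  define P where "P xy = f (fst xy) * g (snd xy)" for xy
  have Pn: "(\<lambda>xy. norm (P xy)) summable_on (SIGMA x:UNIV. UNIV)"
  proof (rule summable_on_SigmaI)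
    show "((\<lambda>y. norm (P (x, y))) has_sum norm (f x) * infsum (\<lambda>y. norm (g y)) UNIV) UNIV" for x
      unfolding P_def norm_mult using has_sum_cmult_right[OF has_sum_infsum[OF gn], of "norm (f x)"] by simp
    show "(\<lambda>x. norm (f x) * infsum (\<lambda>y. norm (g y)) UNIV) summable_on UNIV"
      using fn by (rule summable_on_cmult_left)
  qed auto
  have PS: "(P has_sum A * B) (SIGMA x:UNIV. UNIV)"
  proof (rule has_sum_SigmaI)
    show "((\<lambda>y. P (x, y)) has_sum f x * B) UNIV" for x
      unfolding P_def using gB by (auto intro!: has_sum_cmult_right)
    show "((\<lambda>x. f x * B) has_sum A * B) UNIV" using fA by (rule has_sum_cmult_left)
    show "P summable_on (SIGMA x:UNIV. UNIV)" using Pn by (rule abs_summable_summable)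
  qed
  have PS': "(P has_sum A * B) UNIV" using PS by simp
  have PnS: "((\<lambda>xy. norm (P xy)) has_sum infsum (\<lambda>xy. norm (P xy)) UNIV) UNIV"
    using Pn by simp
  have key: "(u^m * s^n) * (\<Sum>i\<le>m. \<Sum>j\<le>n. a i j * b (m-i) (n-j)) =
     (\<Sum>ij\<in>{..m}\<times>{..n}. P (ij, (m - fst ij, n - snd ij)))" for m n
  proof -
    have "(\<Sum>ij\<in>{..m}\<times>{..n}. P (ij, (m - fst ij, n - snd ij))) =
          (\<Sum>i\<le>m. \<Sum>j\<le>n. P ((i,j), (m - i, n - j)))"
      by (simp add: sum.cartesian_product case_prod_unfold)
    also have "\<dots> = (\<Sum>i\<le>m. \<Sum>j\<le>n. (u^m * s^n) * (a i j * b (m-i) (n-j)))"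
    proof (intro sum.cong refl)
      fix i j assume "i \<in> {..m}" "j \<in> {..n}"
      then have "u^m = u^i * u^(m-i)" "s^n = s^j * s^(n-j)"
        by (simp_all flip: power_add)
      then show "P ((i,j), (m - i, n - j)) = (u^m * s^n) * (a i j * b (m-i) (n-j))"
        by (simp add: P_def f_def g_def mult_ac)
    qed
    finally show ?thesis by (simp add: sum_distrib_left)
  qed
  have H: "((\<lambda>(m,n). (u^m * s^n) *\<^sub>R (\<Sum>i\<le>m. \<Sum>j\<le>n. a i j * b (m-i) (n-j))) has_sum A * B) UNIV"
    using fiber_reindex[OF PS'] by (simp add: key case_prod_unfold)
  have N: "(\<lambda>(m,n). norm ((u^m * s^n) *\<^sub>R (\<Sum>i\<le>m. \<Sum>j\<le>n. a i j * b (m-i) (n-j)))) summable_on UNIV"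
  proof (rule summable_on_comparison_test)
    show "(\<lambda>mn. \<Sum>ij\<in>{..fst mn}\<times>{..snd mn}. norm (P (ij, (fst mn - fst ij, snd mn - snd ij)))) summable_on UNIV"
      using fiber_reindex[OF PnS] by (rule has_sum_imp_summable)
    show "(\<lambda>(m,n). norm ((u^m * s^n) *\<^sub>R (\<Sum>i\<le>m. \<Sum>j\<le>n. a i j * b (m-i) (n-j)))) x \<le>
          (\<Sum>ij\<in>{..fst x}\<times>{..snd x}. norm (P (ij, (fst x - fst ij, snd x - snd ij))))" for x
      using key[of "fst x" "snd x"] norm_sum[of "\<lambda>ij. P (ij, (fst x - fst ij, snd x - snd ij))" "{..fst x}\<times>{..snd x}"]
      by (simp add: case_prod_unfold)
  qed auto
  show ?thesis using H N unfolding ser_def by simp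
qed

definition ra :: "(real \<times> real) set \<Rightarrow> (real \<times> real \<Rightarrow> 'a::real_normed_vector) \<Rightarrow> bool" where
  "ra \<Omega> f \<longleftrightarrow> (\<forall>p\<in>\<Omega>. \<exists>r>0. ball p r \<subseteq> \<Omega> \<and> (\<exists>c. \<forall>q\<in>ball p r. ser (fst q - fst p) (snd q - snd p) c (f q)))"

lemma ra_imp: "ra \<Omega> f \<Longrightarrow> real_analytic_on2 \<Omega> f"
  unfolding ra_def real_analytic_on2_def ser_def by blast

lemma ra_cong: "ra \<Omega> f \<Longrightarrow> (\<And>q. q \<in> \<Omega> \<Longrightarrow> f q = g q) \<Longrightarrow> ra \<Omega> g"
  unfolding ra_def by (smt (verit, best) subsetD)

lemma ra_blin: "bounded_linear L \<Longrightarrow> ra \<Omega> f \<Longrightarrow> ra \<Omega> (\<lambda>q. L (f q))"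
  unfolding ra_def by (blast intro: ser_blin)

lemma ra_mult:
  fixes f g :: "real \<times> real \<Rightarrow> real"
  assumes "ra \<Omega> f" "ra \<Omega> g" shows "ra \<Omega> (\<lambda>q. f q * g q)"
  unfolding ra_def
proof
  fix p assume p: "p \<in> \<Omega>"
  obtain r1 c1 where r1: "r1 > 0" "ball p r1 \<subseteq> \<Omega>" "\<forall>q\<in>ball p r1. ser (fst q - fst p) (snd q - snd p) c1 (f q)"
    using assms(1) p unfolding ra_def by blast
  obtain r2 c2 where r2: "r2 > 0" "ball p r2 \<subseteq> \<Omega>" "\<forall>q\<in>ball p r2. ser (fst q - fst p) (snd q - snd p) c2 (g q)"
    using assms(2) p unfolding ra_def by blast
  show "\<exists>r>0. ball p r \<subseteq> \<Omega> \<and> (\<exists>c. \<forall>q\<in>ball p r. ser (fst q - fst p) (snd q - snd p) c (f q * g q))"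
    using r1 r2 by (intro exI[of _ "min r1 r2"] conjI exI[of _ "\<lambda>m n. \<Sum>i\<le>m. \<Sum>j\<le>n. c1 i j * c2 (m-i) (n-j)"]
        ballI ser_mult) auto
qed

lemma ra_add:
  fixes f g :: "real \<times> real \<Rightarrow> 'a::real_normed_vector"
  assumes "ra \<Omega> f" "ra \<Omega> g" shows "ra \<Omega> (\<lambda>q. f q + g q)"
  unfolding ra_def
proof
  fix p assume p: "p \<in> \<Omega>"
  obtain r1 c1 where r1: "r1 > 0" "ball p r1 \<subseteq> \<Omega>" "\<forall>q\<in>ball p r1. ser (fst q - fst p) (snd q - snd p) c1 (f q)"
    using assms(1) p unfolding ra_def by blast
  obtain r2 c2 where r2: "r2 > 0" "ball p r2 \<subseteq> \<Omega>" "\<forall>q\<in>ball p r2. ser (fst q - fst p) (snd q - snd p) c2 (g q)"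
    using assms(2) p unfolding ra_def by blast
  show "\<exists>r>0. ball p r \<subseteq> \<Omega> \<and> (\<exists>c. \<forall>q\<in>ball p r. ser (fst q - fst p) (snd q - snd p) c (f q + g q))"
    using r1 r2 by (intro exI[of _ "min r1 r2"] conjI exI[of _ "\<lambda>m n. c1 m n + c2 m n"]
        ballI ser_add) auto
qed



lemma CS:
  fixes F :: "complex \<Rightarrow> complex" and c z :: complex and r M u s :: real
  assumes holF: "F holomorphic_on V" and oV: "open V" and sub: "cball c r \<subseteq> V" and r: "r > 0"
    and dM: "\<And>w. w \<in> cball c r \<Longrightarrow> norm (deriv F w) \<le> M" and uM: "\<bar>u\<bar> * M \<le> 1/2"
    and z: "z \<in> ball c r" and root: "z - c - of_real s + of_real u * F z = 0"
  shows "((\<lambda>w. F w * (1 + of_real u * deriv F w) / (w - c - of_real s + of_real u * F w))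
           has_contour_integral (2 * of_real pi * \<i> * F z)) (circlepath c r)"
proof -
  define Q where "Q = (\<lambda>w. if w = z then deriv F z else (F w - F z) / (w - z))"
  have holQ: "Q holomorphic_on V" unfolding Q_def using holF oV by (rule pole_lemma_open)
  have zc: "z \<in> cball c r" using z by auto
  have Qb: "norm (Q w) \<le> M" if w: "w \<in> cball c r" for w
  proof (cases "w = z")
    case True then show ?thesis using dM[OF zc] by (simp add: Q_def)
  next
    case False
    have "norm (F w - F z) \<le> M * norm (w - z)"
    proof (rule field_differentiable_bound[OF convex_cball])
      show "(F has_field_derivative deriv F x) (at x within cball c r)" if "x \<in> cball c r" for x
        using holomorphic_derivI[OF holF oV] sub that by blast
    qed (use dM w zc in auto)
    then show ?thesis using False by (simp add: Q_def norm_divide divide_le_eq)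
  qed
  define H where "H w = 1 + of_real u * Q w" for w
  have Hnz: "H w \<noteq> 0" if "w \<in> cball c r" for w
  proof
    assume "H w = 0"
    then have "of_real u * Q w = -1" by (simp add: H_def add_eq_0_iff)
    then have "norm (of_real u * Q w) = 1" by simp
    moreover have "norm (of_real u * Q w) \<le> \<bar>u\<bar> * M"
      using Qb[OF that] by (simp add: norm_mult mult_left_mono)
    ultimately show False using uM by simp
  qed
  define \<phi> where "\<phi> w = F w * (1 + of_real u * deriv F w) / H w" for w
  have holD: "deriv F holomorphic_on V" using holF oV by (rule holomorphic_deriv)
  have hol\<phi>: "\<phi> holomorphic_on ball c r"
  proof -
    have "ball c r \<subseteq> V" using sub by auto
    then show ?thesis unfolding \<phi>_def H_def using Hnz[unfolded H_def]
      by (intro holomorphic_intros holomorphic_on_subset[OF holF] holomorphic_on_subset[OF holD]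
          holomorphic_on_subset[OF holQ]) auto
  qed
  have con\<phi>: "continuous_on (cball c r) \<phi>"
  proof -
    have cF: "continuous_on (cball c r) F" and cD: "continuous_on (cball c r) (deriv F)"
      and cQ: "continuous_on (cball c r) Q"
      using holomorphic_on_imp_continuous_on holF holD holQ sub continuous_on_subset by blast+
    show ?thesis unfolding \<phi>_def H_def using Hnz[unfolded H_def]
      by (intro continuous_intros cF cD cQ) auto
  qed
  have "norm (z - c) < r" using z by (simp add: dist_norm norm_minus_commute)
  from Cauchy_integral_circlepath[OF con\<phi> hol\<phi> this]
  have I: "((\<lambda>w. \<phi> w / (w - z)) has_contour_integral (2 * of_real pi * \<i> * \<phi> z)) (circlepath c r)" .
  have "\<phi> z = F z" using Hnz[OF zc] by (simp add: \<phi>_def H_def Q_def)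
  then have I': "((\<lambda>w. \<phi> w / (w - z)) has_contour_integral (2 * of_real pi * \<i> * F z)) (circlepath c r)"
    using I by simp
  show ?thesis
  proof (rule has_contour_integral_eq[OF I'])
    fix w assume "w \<in> path_image (circlepath c r)"
    then have ws: "w \<in> sphere c r" using r by simp
    then have wz: "w \<noteq> z" using z by auto
    have wc: "w \<in> cball c r" using ws by auto
    have G: "w - c - of_real s + of_real u * F w = (w - z) * H w"
      using root wz by (simp add: H_def Q_def field_simps)
    show "\<phi> w / (w - z) = F w * (1 + of_real u * deriv F w) / (w - c - of_real s + of_real u * F w)"
      unfolding G \<phi>_def using wz Hnz[OF wc] by (simp add: field_simps)
  qed
qed



lemma pd_of_deriv:
  fixes f :: "real \<times> real \<Rightarrow> 'a::real_normed_vector"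
  assumes D: "(f has_derivative D) (at p)"
  shows "pdx f p = D (1,0)" "pdy f p = D (0,1)"
proof -
  interpret D: bounded_linear D using D by (rule has_derivative_bounded_linear)
  have i1: "((\<lambda>t. (t, snd p)) has_derivative (\<lambda>h. (h, 0))) (at (fst p))"
    by (auto intro!: derivative_eq_intros)
  have D1: "(f has_derivative D) (at ((\<lambda>t. (t, snd p)) (fst p)))" using D by simp
  have "((\<lambda>t. f (t, snd p)) has_derivative (\<lambda>h. D (h, 0))) (at (fst p))"
    using diff_chain_at[OF i1 D1] by (simp add: o_def)
  moreover have "(\<lambda>h. D (h, 0)) = (\<lambda>h. h *\<^sub>R D (1,0))"
  proof
    fix h :: real show "D (h, 0) = h *\<^sub>R D (1,0)" using D.scaleR[of h "(1,0)"] by simp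
  qed
  ultimately have "((\<lambda>t. f (t, snd p)) has_vector_derivative D (1,0)) (at (fst p))"
    by (simp add: has_vector_derivative_def)
  then show "pdx f p = D (1,0)" unfolding pdx_def by (rule vector_derivative_at)
  have i2: "((\<lambda>t. (fst p, t)) has_derivative (\<lambda>h. (0, h))) (at (snd p))"
    by (auto intro!: derivative_eq_intros)
  have D2: "(f has_derivative D) (at ((\<lambda>t. (fst p, t)) (snd p)))" using D by simp
  have "((\<lambda>t. f (fst p, t)) has_derivative (\<lambda>h. D (0, h))) (at (snd p))"
    using diff_chain_at[OF i2 D2] by (simp add: o_def)
  moreover have "(\<lambda>h. D (0, h)) = (\<lambda>h. h *\<^sub>R D (0,1))"
  proof
    fix h :: real show "D (0, h) = h *\<^sub>R D (0,1)" using D.scaleR[of h "(0,1)"] by simp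
  qed
  ultimately have "((\<lambda>t. f (fst p, t)) has_vector_derivative D (0,1)) (at (snd p))"
    by (simp add: has_vector_derivative_def)
  then show "pdy f p = D (0,1)" unfolding pdy_def by (rule vector_derivative_at)
qed

lemma deriv_form:
  fixes f :: "real \<times> real \<Rightarrow> 'a::real_normed_vector"
  assumes D: "(f has_derivative D) (at p)"
  shows "(f has_derivative (\<lambda>v. fst v *\<^sub>R pdx f p + snd v *\<^sub>R pdy f p)) (at p)"
proof -
  interpret D: bounded_linear D using D by (rule has_derivative_bounded_linear)
  have eq: "D v = fst v *\<^sub>R D (1,0) + snd v *\<^sub>R D (0,1)" for v
  proof -
    have "v = fst v *\<^sub>R (1,0) + snd v *\<^sub>R (0,1)" by (cases v) simp
    then have "D v = D (fst v *\<^sub>R (1,0) + snd v *\<^sub>R (0,1))" by simp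
    also have "\<dots> = fst v *\<^sub>R D (1,0) + snd v *\<^sub>R D (0,1)"
      by (simp only: D.add D.scaleR)
    finally show ?thesis .
  qed
  have "D = (\<lambda>v. fst v *\<^sub>R pdx f p + snd v *\<^sub>R pdy f p)"
  proof
    fix v show "D v = fst v *\<^sub>R pdx f p + snd v *\<^sub>R pdy f p"
      using eq[of v] pd_of_deriv[OF D] by simp
  qed
  then show ?thesis using D by simp
qed

locale rig =
  fixes \<Omega> :: "(real \<times> real) set" and \<alpha> \<beta> :: "real \<times> real \<Rightarrow> real"
  assumes o\<Omega>: "open \<Omega>" and rg: "rigid_elliptic_structure \<Omega> \<alpha> \<beta>"
begin

abbreviation lam where "lam \<equiv> spectral_param \<alpha> \<beta>"
definition Dl where "Dl q = 4 * \<alpha> q - (\<beta> q)^2"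

lemma Dpos: "q \<in> \<Omega> \<Longrightarrow> Dl q > 0"
  using rg unfolding rigid_elliptic_structure_def elliptic_structure_def Dl_def by auto

lemma C1: "C1_on \<Omega> \<alpha>" "C1_on \<Omega> \<beta>"
  using rg unfolding rigid_elliptic_structure_def by auto

lemma d\<alpha>: "q \<in> \<Omega> \<Longrightarrow> (\<alpha> has_derivative (\<lambda>v. fst v * pdx \<alpha> q + snd v * pdy \<alpha> q)) (at q)"
proof -
  assume q: "q \<in> \<Omega>"
  have "\<alpha> differentiable at q" using C1(1) q o\<Omega> unfolding C1_on_def
    by (simp add: differentiable_on_eq_differentiable_at)
  then obtain D where "(\<alpha> has_derivative D) (at q)" unfolding differentiable_def by blast
  from deriv_form[OF this] show ?thesis by simp
qed

lemma d\<beta>: "q \<in> \<Omega> \<Longrightarrow> (\<beta> has_derivative (\<lambda>v. fst v * pdx \<beta> q + snd v * pdy \<beta> q)) (at q)"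
proof -
  assume q: "q \<in> \<Omega>"
  have "\<beta> differentiable at q" using C1(2) q o\<Omega> unfolding C1_on_def
    by (simp add: differentiable_on_eq_differentiable_at)
  then obtain D where "(\<beta> has_derivative D) (at q)" unfolding differentiable_def by blast
  from deriv_form[OF this] show ?thesis by simp
qed

lemma cont: "continuous_on \<Omega> \<alpha>" "continuous_on \<Omega> \<beta>" "continuous_on \<Omega> (pdx \<alpha>)"
   "continuous_on \<Omega> (pdy \<alpha>)" "continuous_on \<Omega> (pdx \<beta>)" "continuous_on \<Omega> (pdy \<beta>)"
  using C1 differentiable_imp_continuous_on unfolding C1_on_def by auto

definition lx where "lx q = of_real (- pdx \<beta> q / 2) +
   \<i> * of_real ((4 * pdx \<alpha> q - 2 * \<beta> q * pdx \<beta> q) / (4 * sqrt (Dl q)))"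
definition ly where "ly q = of_real (- pdy \<beta> q / 2) +
   \<i> * of_real ((4 * pdy \<alpha> q - 2 * \<beta> q * pdy \<beta> q) / (4 * sqrt (Dl q)))"

lemma lam_eq: "lam q = of_real (- \<beta> q / 2) + \<i> * of_real (sqrt (Dl q) / 2)"
  by (simp add: spectral_param_def Dl_def Complex_eq)

lemma dlam: "q \<in> \<Omega> \<Longrightarrow> (lam has_derivative (\<lambda>v. fst v *\<^sub>R lx q + snd v *\<^sub>R ly q)) (at q)"
proof -
  assume q: "q \<in> \<Omega>"
  have dD: "(Dl has_derivative (\<lambda>v. 4 * (fst v * pdx \<alpha> q + snd v * pdy \<alpha> q) - 2 * \<beta> q * (fst v * pdx \<beta> q + snd v * pdy \<beta> q))) (at q)"
    unfolding Dl_def[abs_def]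
    by (rule derivative_eq_intros d\<alpha>[OF q] d\<beta>[OF q] refl | simp add: fun_eq_iff algebra_simps)+
  have sq: "((\<lambda>q. sqrt (Dl q)) has_derivative (\<lambda>v. (4 * (fst v * pdx \<alpha> q + snd v * pdy \<alpha> q) - 2 * \<beta> q * (fst v * pdx \<beta> q + snd v * pdy \<beta> q)) * (inverse (sqrt (Dl q)) / 2))) (at q)"
    by (rule has_derivative_real_sqrt[OF Dpos[OF q] dD])
  have "((\<lambda>q. of_real (- \<beta> q / 2) + \<i> * of_real (sqrt (Dl q) / 2)) has_derivative
     (\<lambda>v. of_real (- (fst v * pdx \<beta> q + snd v * pdy \<beta> q) / 2) + \<i> * of_real ((4 * (fst v * pdx \<alpha> q + snd v * pdy \<alpha> q) - 2 * \<beta> q * (fst v * pdx \<beta> q + snd v * pdy \<beta> q)) * (inverse (sqrt (Dl q)) / 2) / 2))) (at q)"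
    by (rule derivative_eq_intros bounded_linear.has_derivative[OF bounded_linear_of_real] d\<beta>[OF q] sq refl | simp add: fun_eq_iff algebra_simps)+
  moreover have "(\<lambda>v. of_real (- (fst v * pdx \<beta> q + snd v * pdy \<beta> q) / 2) + \<i> * of_real ((4 * (fst v * pdx \<alpha> q + snd v * pdy \<alpha> q) - 2 * \<beta> q * (fst v * pdx \<beta> q + snd v * pdy \<beta> q)) * (inverse (sqrt (Dl q)) / 2) / 2))
     = (\<lambda>v. fst v *\<^sub>R lx q + snd v *\<^sub>R ly q)"
    using Dpos[OF q] by (intro ext) (simp add: lx_def ly_def complex_eq_iff field_simps)
  ultimately show ?thesis unfolding lam_eq[abs_def] by simp
qed

lemma pdlam: "q \<in> \<Omega> \<Longrightarrow> pdx lam q = lx q" "q \<in> \<Omega> \<Longrightarrow> pdy lam q = ly q"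
  using pd_of_deriv[OF dlam] by simp_all

lemma burg: "q \<in> \<Omega> \<Longrightarrow> lx q = - lam q * ly q"
proof -
  assume q: "q \<in> \<Omega>"
  have "pdx lam q + lam q * pdy lam q = 0"
    using rg q unfolding rigid_elliptic_structure_def obstruction_def moving_unit_def by blast
  then have "lx q + lam q * ly q = 0" using pdlam[OF q] by simp
  then show ?thesis by (simp add: eq_neg_iff_add_eq_0)
qed

lemma Dl_eq: "Dl = (\<lambda>q. 4 * \<alpha> q - (\<beta> q)^2)"
  by (simp add: fun_eq_iff Dl_def)

lemma contDl: "continuous_on \<Omega> Dl"
  unfolding Dl_eq using cont by (intro continuous_intros) auto

lemma contsq: "continuous_on \<Omega> (\<lambda>q. sqrt (Dl q))"
  using contDl by (intro continuous_intros)

lemma cont_lam: "continuous_on \<Omega> lam"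
  unfolding lam_eq[abs_def] using cont contsq contDl by (intro continuous_intros) auto

lemma cont_ly: "continuous_on \<Omega> ly"
proof -
  have "\<forall>q\<in>\<Omega>. 4 * sqrt (Dl q) \<noteq> 0"
  proof
    fix q assume "q \<in> \<Omega>"
    then have "Dl q > 0" by (rule Dpos)
    then show "4 * sqrt (Dl q) \<noteq> 0" by simp
  qed
  then show ?thesis unfolding ly_def[abs_def] using cont contsq contDl
    by (intro continuous_intros) fastforce+
qed

definition emb :: "complex \<Rightarrow> real \<times> real" where "emb z = (Re z, Im z)"
definition Oc where "Oc = {z. emb z \<in> \<Omega>}"
definition L where "L z = lam (emb z)"
definition LY where "LY z = ly (emb z)"
definition W where "W x0 z = of_real (Im z) - of_real (Re z - x0) * L z"
definition A where "A x0 z = 1 - of_real (Re z - x0) * LY z"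

lemma bl_emb: "bounded_linear emb"
  unfolding emb_def by (intro bounded_linear_Pair bounded_linear_Re bounded_linear_Im)

lemma cont_emb: "continuous_on UNIV emb"
  using bl_emb linear_continuous_on by blast

lemma open_Oc: "open Oc"
proof -
  have "Oc = emb -` \<Omega>" by (auto simp: Oc_def)
  then show ?thesis using open_vimage[OF o\<Omega> cont_emb] by simp
qed

lemma demb: "(emb has_derivative emb) (at z)"
  using bl_emb by (rule bounded_linear_imp_has_derivative)

lemma dL: "z \<in> Oc \<Longrightarrow> (L has_derivative (\<lambda>v. (of_real (Im v) - of_real (Re v) * L z) * LY z)) (at z)"
proof -
  assume z: "z \<in> Oc"
  have "(lam has_derivative (\<lambda>v. fst v *\<^sub>R lx (emb z) + snd v *\<^sub>R ly (emb z))) (at (emb z))"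
    using z by (intro dlam) (simp add: Oc_def)
  from diff_chain_at[OF demb this]
  have "(L has_derivative (\<lambda>v. Re v *\<^sub>R lx (emb z) + Im v *\<^sub>R ly (emb z))) (at z)"
    by (simp add: o_def L_def[abs_def] emb_def)
  moreover have "(\<lambda>v. Re v *\<^sub>R lx (emb z) + Im v *\<^sub>R ly (emb z)) = (\<lambda>v. (of_real (Im v) - of_real (Re v) * L z) * LY z)"
    using burg[of "emb z"] z by (intro ext) (simp add: Oc_def L_def LY_def scaleR_conv_of_real algebra_simps)
  ultimately show ?thesis by simp
qed

lemma dW: "z \<in> Oc \<Longrightarrow> (W x0 has_derivative (\<lambda>v. A x0 z * (of_real (Im v) - of_real (Re v) * L z))) (at z)"
proof -
  assume z: "z \<in> Oc"
  have dIm: "((\<lambda>z. of_real (Im z) :: complex) has_derivative (\<lambda>v. of_real (Im v))) (at z)"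
    by (intro bounded_linear_imp_has_derivative bounded_linear_compose[OF bounded_linear_of_real bounded_linear_Im])
  have dRe: "((\<lambda>z. of_real (Re z - x0) :: complex) has_derivative (\<lambda>v. of_real (Re v))) (at z)"
  proof -
    have "((\<lambda>z. of_real (Re z) - of_real x0 :: complex) has_derivative (\<lambda>v. of_real (Re v) - 0)) (at z)"
      by (intro has_derivative_diff has_derivative_const bounded_linear_imp_has_derivative
          bounded_linear_compose[OF bounded_linear_of_real bounded_linear_Re])
    then show ?thesis by simp
  qed
  have "(W x0 has_derivative (\<lambda>v. of_real (Im v) - (of_real (Re z - x0) * ((of_real (Im v) - of_real (Re v) * L z) * LY z) + of_real (Re v) * L z))) (at z)"
    unfolding W_def[abs_def]
    by (intro has_derivative_diff dIm has_derivative_mult dRe dL z)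
  moreover have "(\<lambda>v. of_real (Im v) - (of_real (Re z - x0) * ((of_real (Im v) - of_real (Re v) * L z) * LY z) + of_real (Re v) * L z))
      = (\<lambda>v. A x0 z * (of_real (Im v) - of_real (Re v) * L z))"
    by (intro ext) (simp only: A_def ring_distribs mult.assoc diff_diff_eq, simp add: algebra_simps)
  ultimately show ?thesis by simp
qed

lemma ImL: "z \<in> Oc \<Longrightarrow> Im (L z) > 0"
  using Dpos by (simp add: L_def lam_eq Oc_def)

lemma contL: "continuous_on Oc L"
proof -
  have "continuous_on Oc (lam \<circ> emb)"
    by (rule continuous_on_compose[OF continuous_on_subset[OF cont_emb]])
       (auto intro: continuous_on_subset[OF cont_lam] simp: Oc_def)
  then show ?thesis by (simp add: o_def L_def[abs_def])
qed

lemma contLY: "continuous_on Oc LY"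
proof -
  have "continuous_on Oc (ly \<circ> emb)"
    by (rule continuous_on_compose[OF continuous_on_subset[OF cont_emb]])
       (auto intro: continuous_on_subset[OF cont_ly] simp: Oc_def)
  then show ?thesis by (simp add: o_def LY_def[abs_def])
qed

lemma contA: "continuous_on Oc (A x0)"
  unfolding A_def[abs_def] using contLY by (intro continuous_intros)

lemma contW: "continuous_on Oc (W x0)"
  unfolding W_def[abs_def] using contL by (intro continuous_intros)

lemma isC: "z \<in> Oc \<Longrightarrow> isCont L z" "z \<in> Oc \<Longrightarrow> isCont (A x0) z" "z \<in> Oc \<Longrightarrow> isCont (W x0) z"
  using contL contA contW open_Oc continuous_on_eq_continuous_at by blast+

definition gi where "gi l q = Complex (- Im q * inverse (Im l)) (Re q - Re l * Im q * inverse (Im l))"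

lemma gi_bl: "bounded_linear (gi l)"
proof -
  have "linear (gi l)"
    by (rule linearI) (simp_all add: gi_def complex_eq_iff algebra_simps)
  then show ?thesis by (simp add: linear_conv_bounded_linear)
qed

lemma gi_inv: "Im l \<noteq> 0 \<Longrightarrow> gi l (of_real (Im v) - of_real (Re v) * l) = v"
  by (simp add: gi_def complex_eq_iff field_simps)

lemma gi_inv2: "Im l \<noteq> 0 \<Longrightarrow> of_real (Im (gi l q)) - of_real (Re (gi l q)) * l = q"
  by (simp add: gi_def complex_eq_iff field_simps)

lemma local_inj:
  assumes z0: "z0 \<in> Oc"
  obtains r where "r > 0" "ball z0 r \<subseteq> Oc" "inj_on (W (Re z0)) (ball z0 r)"
proof -
  define x0 where "x0 = Re z0"
  define L0 where "L0 = L z0"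
  have A0: "A x0 z0 = 1" by (simp add: A_def x0_def)
  have IL0: "Im L0 \<noteq> 0" using ImL[OF z0] by (simp add: L0_def)
  obtain r where "r > 0" "ball z0 r \<subseteq> Oc" "inj_on (W x0) (ball z0 r)"
  proof (rule has_derivative_locally_injective[OF z0 open_Oc gi_bl[of L0], where f'="\<lambda>z v. A x0 z * (of_real (Im v) - of_real (Re v) * L z)"])
    show "gi L0 \<circ> (\<lambda>v. A x0 z0 * (of_real (Im v) - of_real (Re v) * L z0)) = id"
      using gi_inv[OF IL0] by (auto simp: A0 L0_def fun_eq_iff)
    show "\<And>x. x \<in> Oc \<Longrightarrow> (W x0 has_derivative (\<lambda>v. A x0 x * (of_real (Im v) - of_real (Re v) * L x))) (at x)"
      by (rule dW)
    fix e :: real assume e: "e > 0"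
    obtain d1 where d1: "d1 > 0" "\<And>z. dist z z0 < d1 \<Longrightarrow> dist (A x0 z) (A x0 z0) < e/3"
      using isC(2)[OF z0, of x0] e unfolding continuous_at_eps_delta by (meson divide_pos_pos zero_less_numeral)
    have "isCont (\<lambda>z. A x0 z * L z) z0" using isC[OF z0] by (intro continuous_intros)
    then obtain d2 where d2: "d2 > 0" "\<And>z. dist z z0 < d2 \<Longrightarrow> dist (A x0 z * L z) (A x0 z0 * L z0) < e/3"
      using e unfolding continuous_at_eps_delta by (meson divide_pos_pos zero_less_numeral)
    show "\<exists>d>0. \<forall>x. dist z0 x < d \<longrightarrow> onorm (\<lambda>v. A x0 x * (of_real (Im v) - of_real (Re v) * L x) - A x0 z0 * (of_real (Im v) - of_real (Re v) * L z0)) < e"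
    proof (intro exI[of _ "min d1 d2"] conjI allI impI)
      show "min d1 d2 > 0" using d1 d2 by simp
      fix x assume "dist z0 x < min d1 d2"
      then have "dist x z0 < d1" "dist x z0 < d2" by (simp_all add: dist_commute)
      then have "dist (A x0 x) 1 < e/3" "dist (A x0 x * L x) L0 < e/3"
        using d1(2) d2(2) by (simp_all add: A0 L0_def)
      then have x1: "norm (A x0 x - 1) < e/3" and x2: "norm (A x0 x * L x - L0) < e/3"
        by (simp_all add: dist_norm)
      have "onorm (\<lambda>v. A x0 x * (of_real (Im v) - of_real (Re v) * L x) - A x0 z0 * (of_real (Im v) - of_real (Re v) * L z0))
            \<le> norm (A x0 x - 1) + norm (A x0 x * L x - L0)"
      proof (rule onorm_le)
        fix v :: complex
        have "A x0 x * (of_real (Im v) - of_real (Re v) * L x) - A x0 z0 * (of_real (Im v) - of_real (Re v) * L z0)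
              = (A x0 x - 1) * of_real (Im v) - (A x0 x * L x - L0) * of_real (Re v)"
          by (simp add: A0 L0_def algebra_simps)
        also have "norm \<dots> \<le> norm (A x0 x - 1) * \<bar>Im v\<bar> + norm (A x0 x * L x - L0) * \<bar>Re v\<bar>"
          by (rule order_trans[OF norm_triangle_ineq4]) (simp add: norm_mult)
        also have "\<dots> \<le> norm (A x0 x - 1) * norm v + norm (A x0 x * L x - L0) * norm v"
          by (intro add_mono mult_left_mono abs_Im_le_cmod abs_Re_le_cmod) auto
        finally show "norm (A x0 x * (of_real (Im v) - of_real (Re v) * L x) - A x0 z0 * (of_real (Im v) - of_real (Re v) * L z0))
            \<le> (norm (A x0 x - 1) + norm (A x0 x * L x - L0)) * norm v"
          by (simp add: algebra_simps)
      qed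
      also have "\<dots> < e" using x1 x2 norm_ge_zero[of "A x0 x - 1"] norm_ge_zero[of "A x0 x * L x - L0"] by linarith
      finally show "onorm (\<lambda>v. A x0 x * (of_real (Im v) - of_real (Re v) * L x) - A x0 z0 * (of_real (Im v) - of_real (Re v) * L z0)) < e" .
    qed
  qed
  then show ?thesis using that by (simp add: x0_def)
qed

lemma local_F:
  assumes z0: "z0 \<in> Oc"
  obtains S0 F where "open S0" "z0 \<in> S0" "S0 \<subseteq> Oc" "open (W (Re z0) ` S0)"
    "F holomorphic_on (W (Re z0) ` S0)" "\<And>z. z \<in> S0 \<Longrightarrow> F (W (Re z0) z) = L z"
proof -
  define x0 where "x0 = Re z0"
  obtain r where r: "r > 0" "ball z0 r \<subseteq> Oc" "inj_on (W x0) (ball z0 r)"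
    using local_inj[OF z0] unfolding x0_def by blast
  have A0: "A x0 z0 = 1" by (simp add: A_def x0_def)
  obtain d where d: "d > 0" "\<And>z. dist z z0 < d \<Longrightarrow> dist (A x0 z) (A x0 z0) < 1/2"
    using isC(2)[OF z0, of x0] unfolding continuous_at_eps_delta by (meson zero_less_divide_1_iff zero_less_numeral)
  define S0 where "S0 = ball z0 (min r d)"
  have oS: "open S0" and zS: "z0 \<in> S0" and SO: "S0 \<subseteq> Oc" using r d by (auto simp: S0_def)
  have inj: "inj_on (W x0) S0" using r(3) by (rule inj_on_subset) (auto simp: S0_def)
  have Anz: "A x0 z \<noteq> 0" if "z \<in> S0" for z
  proof
    assume "A x0 z = 0"
    moreover have "dist z z0 < d" using that by (auto simp: S0_def dist_commute)
    ultimately show False using d(2)[of z] A0 by simp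
  qed
  have cW: "continuous_on S0 (W x0)" using contW SO by (rule continuous_on_subset)
  have oV: "open (W x0 ` S0)" by (rule invariance_of_domain[OF cW oS inj])
  define g where "g = inv_into S0 (W x0)"
  have gW: "g (W x0 z) = z" if "z \<in> S0" for z using inj that by (simp add: g_def)
  define F where "F = L \<circ> g"
  have FD: "(F has_field_derivative (LY z / A x0 z)) (at (W x0 z))" if z: "z \<in> S0" for z
  proof -
    have zO: "z \<in> Oc" using SO z by auto
    have IL: "Im (L z) \<noteq> 0" using ImL[OF zO] by simp
    define g' where "g' q = gi (L z) (q / A x0 z)" for q
    have "(g has_derivative g') (at (W x0 z))"
    proof (rule has_derivative_inverse_strong[OF oS z cW gW dW[OF zO]])
      show "(\<lambda>v. A x0 z * (of_real (Im v) - of_real (Re v) * L z)) \<circ> g' = id"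
        using gi_inv2[OF IL] Anz[OF z] by (auto simp: g'_def fun_eq_iff)
    qed
    moreover have "(L has_derivative (\<lambda>v. (of_real (Im v) - of_real (Re v) * L z) * LY z)) (at (g (W x0 z)))"
      using gW[OF z] dL[OF zO] by simp
    ultimately have h1: "(F has_derivative ((\<lambda>v. (of_real (Im v) - of_real (Re v) * L z) * LY z) \<circ> g')) (at (W x0 z))"
      unfolding F_def by (rule diff_chain_at)
    have h2: "((\<lambda>v. (of_real (Im v) - of_real (Re v) * L z) * LY z) \<circ> g') = (\<lambda>q. (LY z / A x0 z) * q)"
      using gi_inv2[OF IL] Anz[OF z] by (auto simp: g'_def fun_eq_iff)
    show ?thesis unfolding has_field_derivative_def using h1 unfolding h2 .
  qed
  have hol: "F holomorphic_on (W x0 ` S0)"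
    unfolding holomorphic_on_def
  proof
    fix w assume "w \<in> W x0 ` S0"
    then obtain z where z: "z \<in> S0" "w = W x0 z" by blast
    then show "F field_differentiable at w within W x0 ` S0"
      using FD[OF z(1)] field_differentiable_at_within field_differentiable_def by blast
  qed
  have FL: "F (W x0 z) = L z" if "z \<in> S0" for z using gW[OF that] by (simp add: F_def)
  show ?thesis by (rule that[OF oS zS SO oV[unfolded x0_def] hol[unfolded x0_def] FL[unfolded x0_def]])
qed

end



lemma dist_Complex: "dist (Complex a b) (Complex c d) = dist (a, b) (c, d)"
  unfolding dist_Pair_Pair by (simp add: dist_norm cmod_def dist_real_def power2_abs)

lemma G_nz:
  fixes F :: "complex \<Rightarrow> complex"
  assumes "w \<in> sphere c r" "norm (F w) \<le> B" "\<bar>u\<bar> * B + \<bar>s\<bar> < r"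
  shows "w - c - of_real s + of_real u * F w \<noteq> 0"
proof
  assume "w - c - of_real s + of_real u * F w = 0"
  then have "w - c = of_real s - of_real u * F w" by (simp add: algebra_simps)
  then have "norm (w - c) = norm (of_real s - of_real u * F w)" by simp
  also have "\<dots> \<le> \<bar>s\<bar> + \<bar>u\<bar> * norm (F w)"
    using norm_triangle_ineq4[of "of_real s" "of_real u * F w"] by (simp add: norm_mult)
  also have "\<dots> \<le> \<bar>s\<bar> + \<bar>u\<bar> * B" using assms(2) by (simp add: mult_left_mono)
  finally show False using assms(1,3) by (simp add: dist_norm norm_minus_commute)
qed

context rig begin

lemma local_ser:
  assumes p0: "p0 \<in> \<Omega>"
  shows "\<exists>\<delta>>0. ball p0 \<delta> \<subseteq> \<Omega> \<and> (\<exists>cf. \<forall>q\<in>ball p0 \<delta>. ser (fst q - fst p0) (snd q - snd p0) cf (lam q))"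
proof -
  obtain x0 y0 where p0e: "p0 = (x0, y0)" by (cases p0)
  define z0 where "z0 = Complex x0 y0"
  have z0O: "z0 \<in> Oc" using p0 by (simp add: Oc_def emb_def z0_def p0e)
  obtain S0 F where S0: "open S0" "z0 \<in> S0" "S0 \<subseteq> Oc" and oV: "open (W x0 ` S0)"
    and holF: "F holomorphic_on (W x0 ` S0)" and FL: "\<And>z. z \<in> S0 \<Longrightarrow> F (W x0 z) = L z"
    using local_F[OF z0O] by (auto simp: z0_def)
  define V where "V = W x0 ` S0"
  define c where "c = W x0 z0"
  have c: "c = of_real y0" by (simp add: c_def W_def z0_def)
  have cV: "c \<in> V" using S0 by (simp add: V_def c_def)
  obtain r where r: "r > 0" "cball c r \<subseteq> V" using oV cV unfolding V_def
    by (meson open_contains_cball)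
  have oV': "open V" using oV by (simp add: V_def)
  have holF': "F holomorphic_on V" using holF by (simp add: V_def)
  have holD: "deriv F holomorphic_on V" using holF' oV' by (rule holomorphic_deriv)
  have cF: "continuous_on (cball c r) F"
    using holomorphic_on_imp_continuous_on[OF holF'] r(2) by (rule continuous_on_subset)
  have cD: "continuous_on (cball c r) (deriv F)"
    using holomorphic_on_imp_continuous_on[OF holD] r(2) by (rule continuous_on_subset)
  obtain B where B: "\<And>w. w \<in> cball c r \<Longrightarrow> norm (F w) \<le> B"
    using compact_imp_bounded[OF compact_continuous_image[OF cF compact_cball]]
    unfolding bounded_iff by blast
  obtain M where M: "\<And>w. w \<in> cball c r \<Longrightarrow> norm (deriv F w) \<le> M"
    using compact_imp_bounded[OF compact_continuous_image[OF cD compact_cball]]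
    unfolding bounded_iff by blast
  have B0: "B \<ge> 0" using B[of c] r by (auto intro: order_trans[OF norm_ge_zero])
  have M0: "M \<ge> 0" using M[of c] r by (auto intro: order_trans[OF norm_ge_zero])
  obtain d1 where d1: "d1 > 0" "\<And>z. dist z z0 < d1 \<Longrightarrow> dist (W x0 z) (W x0 z0) < r"
    using isC(3)[OF z0O, of x0] r unfolding continuous_at_eps_delta by blast
  obtain d2 where d2: "d2 > 0" "ball z0 d2 \<subseteq> S0"
    using S0 open_contains_ball by blast
  define \<delta> where "\<delta> = min (min d1 d2) (min (1 / (2 * (M + 1))) (r / (2 * (B + 1))))"
  have \<delta>0: "\<delta> > 0" using d1 d2 r B0 M0 by (simp add: \<delta>_def)
  define cf where "cf = (\<lambda>m n. (acoef F F c r m n + (if m = 0 then 0 else acoef F (\<lambda>w. F w * deriv F w) c r (m-1) n)) / (2 * of_real pi * \<i>))"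
  have main: "q \<in> \<Omega> \<and> ser (fst q - x0) (snd q - y0) cf (lam q)" if q: "q \<in> ball p0 \<delta>" for q
  proof -
    define u where "u = fst q - x0"
    define s where "s = snd q - y0"
    define zq where "zq = Complex (fst q) (snd q)"
    have dq: "dist q p0 < \<delta>" using q by (simp add: dist_commute)
    have "\<bar>u\<bar> \<le> dist q p0" using dist_fst_le[of q p0] by (simp add: u_def p0e dist_real_def)
    then have hu: "\<bar>u\<bar> < \<delta>" using dq by simp
    have "\<bar>s\<bar> \<le> dist q p0" using dist_snd_le[of q p0] by (simp add: s_def p0e dist_real_def)
    then have hs: "\<bar>s\<bar> < \<delta>" using dq by simp
    have dz: "dist zq z0 = dist q p0" by (simp add: zq_def z0_def p0e dist_Complex)
    have zqS: "zq \<in> S0" using d2 dz dq by (auto simp: \<delta>_def dist_commute)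
    have qO: "q \<in> \<Omega>" using zqS S0(3) by (auto simp: Oc_def emb_def zq_def)
    define zw where "zw = W x0 zq"
    have zwb: "zw \<in> ball c r" using d1(2)[of zq] dz dq by (simp add: zw_def c_def \<delta>_def dist_commute)
    have Fzw: "F zw = lam q" using FL[OF zqS] by (simp add: zw_def L_def emb_def zq_def)
    have root: "zw - c - of_real s + of_real u * F zw = 0"
      using FL[OF zqS] by (simp add: zw_def W_def c zq_def s_def u_def algebra_simps)
    have uM: "\<bar>u\<bar> * M \<le> 1/2"
    proof -
      have "\<bar>u\<bar> \<le> 1 / (2 * (M + 1))" using hu by (simp add: \<delta>_def)
      then have "\<bar>u\<bar> * M \<le> 1 / (2 * (M + 1)) * M" using M0 by (rule mult_right_mono)
      also have "\<dots> = M / (2 * (M + 1))" by simp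
      also have "\<dots> \<le> 1/2" using M0 by (simp add: field_simps)
      finally show ?thesis .
    qed
    have small: "\<bar>u\<bar> * B + \<bar>s\<bar> < r"
    proof -
      have a: "\<bar>u\<bar> < r / (2 * (B + 1))" "\<bar>s\<bar> < r / (2 * (B + 1))" using hu hs by (simp_all add: \<delta>_def)
      have "\<bar>u\<bar> * B + \<bar>s\<bar> \<le> r / (2 * (B + 1)) * B + r / (2 * (B + 1))"
        using a B0 by (intro add_mono mult_right_mono) auto
      also have "\<dots> = r / (2 * (B + 1)) * (B + 1)" by (simp only: distrib_left mult_1_right)
      also have "\<dots> = r / 2"
      proof -
        have "B + 1 \<noteq> 0" using B0 by simp
        then show ?thesis by (simp add: field_simps)
      qed
      also have "\<dots> < r" using r by simp
      finally show ?thesis .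
    qed
    have CSI: "((\<lambda>w. F w * (1 + of_real u * deriv F w) / (w - c - of_real s + of_real u * F w))
           has_contour_integral (2 * of_real pi * \<i> * F zw)) (circlepath c r)"
      by (rule CS[OF holF' oV' r(2) r(1) M uM zwb root])
    have sph: "sphere c r \<subseteq> cball c r" by auto
    have cFs: "continuous_on (sphere c r) F" using cF sph by (rule continuous_on_subset)
    have cDs: "continuous_on (sphere c r) (deriv F)" using cD sph by (rule continuous_on_subset)
    have cFD: "continuous_on (sphere c r) (\<lambda>w. F w * deriv F w)" using cFs cDs by (intro continuous_intros)
    have Bs: "\<And>w. w \<in> sphere c r \<Longrightarrow> norm (F w) \<le> B" using B sph by blast
    have BMs: "\<And>w. w \<in> sphere c r \<Longrightarrow> norm (F w * deriv F w) \<le> B * M"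
      using B M sph B0 M0 by (auto simp: norm_mult intro!: mult_mono)
    note G1 = GS[OF r(1) cFs cFs Bs Bs B0 B0 small]
    note G2 = GS[OF r(1) cFs cFD Bs BMs B0 mult_nonneg_nonneg[OF B0 M0] small]
    define K1 where "K1 = contour_integral (circlepath c r) (\<lambda>w. F w / (w - c - of_real s + of_real u * F w))"
    define K2 where "K2 = contour_integral (circlepath c r) (\<lambda>w. F w * deriv F w / (w - c - of_real s + of_real u * F w))"
    have S1: "ser u s (acoef F F c r) K1" using G1 unfolding ser_def K1_def by simp
    have S2: "ser u s (acoef F (\<lambda>w. F w * deriv F w) c r) K2" using G2 unfolding ser_def K2_def by simp
    have Gnz: "\<forall>w\<in>sphere c r. w - c - of_real s + of_real u * F w \<noteq> 0"
      using G_nz Bs small by blast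
    have i1: "(\<lambda>w. F w / (w - c - of_real s + of_real u * F w)) contour_integrable_on (circlepath c r)"
      using r(1) Gnz cFs by (intro contour_integrable_continuous_circlepath) (auto intro!: continuous_intros)
    have i2: "(\<lambda>w. F w * deriv F w / (w - c - of_real s + of_real u * F w)) contour_integrable_on (circlepath c r)"
      using r(1) Gnz cFD cFs by (intro contour_integrable_continuous_circlepath) (auto intro!: continuous_intros)
    have "contour_integral (circlepath c r) (\<lambda>w. F w * (1 + of_real u * deriv F w) / (w - c - of_real s + of_real u * F w))
        = contour_integral (circlepath c r) (\<lambda>w. F w / (w - c - of_real s + of_real u * F w) + of_real u * (F w * deriv F w / (w - c - of_real s + of_real u * F w)))"
      by (rule arg_cong[where f="contour_integral _"]) (simp add: fun_eq_iff ring_distribs add_divide_distrib mult_ac)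
    also have "\<dots> = K1 + of_real u * K2"
      unfolding K1_def K2_def
      by (subst contour_integral_add[OF i1 contour_integrable_lmul[OF i2]], subst contour_integral_lmul[OF i2], rule refl)
    finally have "K1 + of_real u * K2 = 2 * of_real pi * \<i> * lam q"
      using contour_integral_unique[OF CSI] Fzw by simp
    then have lq: "lam q = (K1 + u *\<^sub>R K2) / (2 * of_real pi * \<i>)"
      by (simp add: scaleR_conv_of_real field_simps)
    have "ser u s (\<lambda>m n. acoef F F c r m n + (if m = 0 then 0 else acoef F (\<lambda>w. F w * deriv F w) c r (m-1) n)) (K1 + u *\<^sub>R K2)"
      by (rule ser_add[OF S1 ser_shift[OF S2]])
    from ser_blin[OF bounded_linear_divide this, of "2 * of_real pi * \<i>"]
    have "ser u s cf (lam q)" unfolding cf_def lq .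
    then show ?thesis using qO by (simp add: u_def s_def)
  qed
  show ?thesis
  proof (intro exI[of _ \<delta>] conjI exI[of _ cf] ballI)
    show "\<delta> > 0" by (rule \<delta>0)
    show "ball p0 \<delta> \<subseteq> \<Omega>" using main by blast
    fix q assume "q \<in> ball p0 \<delta>"
    then show "ser (fst q - fst p0) (snd q - snd p0) cf (lam q)" using main by (simp add: p0e)
  qed
qed

lemma ra_lam: "ra \<Omega> lam"
  unfolding ra_def using local_ser by blast

end

theorem corollary2p6:
  fixes \<Omega> :: "(real \<times> real) set" and \<alpha> \<beta> :: "real \<times> real \<Rightarrow> real"
  assumes "domain2 \<Omega>"
    and "rigid_elliptic_structure \<Omega> \<alpha> \<beta>"
  shows "real_analytic_on2 \<Omega> \<alpha> \<and> real_analytic_on2 \<Omega> \<beta> \<and>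
         real_analytic_on2 \<Omega> (spectral_param \<alpha> \<beta>)"
proof -
  have o: "open \<Omega>" using assms(1) by (simp add: domain2_def)
  interpret rig \<Omega> \<alpha> \<beta> by unfold_locales (rule o, rule assms(2))
  have R: "ra \<Omega> (spectral_param \<alpha> \<beta>)" by (rule ra_lam)
  have RRe: "ra \<Omega> (\<lambda>q. Re (spectral_param \<alpha> \<beta> q))" by (rule ra_blin[OF bounded_linear_Re R])
  have RIm: "ra \<Omega> (\<lambda>q. Im (spectral_param \<alpha> \<beta> q))" by (rule ra_blin[OF bounded_linear_Im R])
  have "ra \<Omega> (\<lambda>q. -2 * Re (spectral_param \<alpha> \<beta> q))"
    by (rule ra_blin[OF bounded_linear_const_mult[OF bounded_linear_Re] R])
  then have Rb: "ra \<Omega> \<beta>" by (rule ra_cong) (simp add: spectral_param_def)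
  have "ra \<Omega> (\<lambda>q. Re (spectral_param \<alpha> \<beta> q) * Re (spectral_param \<alpha> \<beta> q) + Im (spectral_param \<alpha> \<beta> q) * Im (spectral_param \<alpha> \<beta> q))"
    by (rule ra_add[OF ra_mult[OF RRe RRe] ra_mult[OF RIm RIm]])
  then have Ra: "ra \<Omega> \<alpha>"
  proof (rule ra_cong)
    fix q assume q: "q \<in> \<Omega>"
    have "4 * \<alpha> q - (\<beta> q)^2 \<ge> 0" using Dpos[OF q] by (simp add: Dl_def)
    then have "sqrt (4 * \<alpha> q - (\<beta> q)^2) * sqrt (4 * \<alpha> q - (\<beta> q)^2) = 4 * \<alpha> q - (\<beta> q)^2"
      by simp
    then show "Re (spectral_param \<alpha> \<beta> q) * Re (spectral_param \<alpha> \<beta> q) + Im (spectral_param \<alpha> \<beta> q) * Im (spectral_param \<alpha> \<beta> q) = \<alpha> q"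
      by (simp add: spectral_param_def power2_eq_square field_simps)
  qed
  show ?thesis using ra_imp[OF Ra] ra_imp[OF Rb] ra_imp[OF R] by blast
qed


end
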